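(* Let $\mathcal{P}$ be a set of mutually commuting Pauli operators on $n$ qubits generated by $r$ independent Pauli operators. The qubitwise diagonalization algorithm described in the context, with the logarithmic-depth version of Step 2 and with a null vector of symplectic weight at most $r^{(\alpha)}+1$ chosen at each stage $\alpha$, outputs a Clifford circuit that simultaneously diagonalizes all operators in $\mathcal{P}$, in which each stage has depth $O(\log r^{(\alpha)})$ and the whole circuit has depth $O(n\log r)$, assuming two-qubit gates that share a qubit cannot be executed in parallel while gates on disjoint qubits can.
   Context: A Pauli operator on $m$ qubits is encoded, up to phase, by $u=(\boldsymbol{x},\boldsymbol{z})\in\mathbb{F}_2^{2m}$ via $P=\bigotimes_{j=1}^m X^{x_j}Z^{z_j}$. For a set of Pauli operators, the tableau $(\mathcal{X}\mid\mathcal{Z})$ is the binary matrix whose rows encode the operators; the number of independent generators is its $\mathbb{F}_2$-rank. An operator is diagonal on qubit $j$ if its $j$-th tensor factor is $I$ or $Z$. The symplectic weight of $(\boldsymbol{v},\boldsymbol{w})\in\mathbb{F}_2^{2m}$ is $\omega(\boldsymbol{v},\boldsymbol{w})=|\{j: (v_j,w_j)\neq(0,0)\}|$. Qubitwise diagonalization algorithm. At stage $\alpha$: discard the qubits on which all operators are already diagonal; let $n^{(\alpha)}$ be the number of remaining qubits (stop if $n^{(\alpha)}=0$); let $T^{(\alpha)}$ be an independent generating set of the operators restricted to the remaining qubits, of size $r^{(\alpha)}$, with $r^{(\alpha)}\times 2n^{(\alpha)}$ tableau $M^{(\alpha)}$. Choose a nonzero $(\boldsymbol{v},\boldsymbol{w})$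 with $M^{(\alpha)}(\boldsymbol{v};\boldsymbol{w})=0$ over $\mathbb{F}_2$. Step 1: for each qubit $j$, if $v_j=0,w_j=1$ conjugate by a Hadamard $\mathrm{H}(j)$; if $v_j=w_j=1$ conjugate by the phase gate $\mathrm{S}(j)$ and then $\mathrm{H}(j)$. Step 2 (logarithmic-depth version): let $Q=(q_1,q_2,\dots)$ list the qubits $q$ with $(v_q,w_q)\neq(0,0)$; while $|Q|>1$, conjugate by $\mathrm{CNOT}(q_{2j},q_{2j-1})$ (control $q_{2j}$, target $q_{2j-1}$) for $j=1,\dots,\lfloor |Q|/2\rfloor$, then remove $q_{2},q_4,\dots,q_{2\lfloor|Q|/2\rfloor}$ from $Q$. Then proceed to stage $\alpha+1$. The output circuit is the composition of all gates used. *)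

theory Defs
  imports Complex_Main "HOL-Library.Z2"
begin

text \<open>A Pauli operator (up to phase) on qubits 0,1,2,... is encoded by its X-part and Z-part,
  binary vectors over F2 (type bit).  P = tensor_j X^(x j) Z^(z j).\<close>
type_synonym pauli = "(nat \<Rightarrow> bit) \<times> (nat \<Rightarrow> bit)"

definition pauli_on :: "nat \<Rightarrow> pauli \<Rightarrow> bool" where
  "pauli_on n p \<longleftrightarrow> (\<forall>j\<ge>n. fst p j = 0 \<and> snd p j = 0)"

definition vsum :: "pauli set \<Rightarrow> pauli" where
  "vsum T = ((\<lambda>j. \<Sum>p\<in>T. fst p j), (\<lambda>j. \<Sum>p\<in>T. snd p j))"

definition f2span :: "pauli set \<Rightarrow> pauli set" where
  "f2span S = {vsum T | T. finite T \<and> T \<subseteq> S}"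

definition f2indep :: "pauli set \<Rightarrow> bool" where
  "f2indep S \<longleftrightarrow> (\<forall>T. finite T \<and> T \<subseteq> S \<and> T \<noteq> {} \<longrightarrow> vsum T \<noteq> ((\<lambda>_. 0), (\<lambda>_. 0)))"

text \<open>Symplectic product; Paulis commute iff it is 0.\<close>
definition symp :: "nat \<Rightarrow> pauli \<Rightarrow> pauli \<Rightarrow> bit" where
  "symp n p q = (\<Sum>j<n. fst p j * snd q j + snd p j * fst q j)"

text \<open>Diagonal on every qubit j < n: each tensor factor is I or Z.\<close>
definition diagonal_on :: "nat \<Rightarrow> pauli \<Rightarrow> bool" where
  "diagonal_on n p \<longleftrightarrow> (\<forall>j<n. fst p j = 0)"

text \<open>Clifford gates: Hadamard, phase gate S, CNOT (control, target).\<close>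
datatype gate = Hd nat | Ph nat | CX nat nat

text \<open>Tableau action of conjugation P \<mapsto> U P U^dagger (up to phase).\<close>
fun conj_gate :: "gate \<Rightarrow> pauli \<Rightarrow> pauli" where
  "conj_gate (Hd j) (x, z) = (x(j := z j), z(j := x j))"
| "conj_gate (Ph j) (x, z) = (x, z(j := z j + x j))"
| "conj_gate (CX c t) (x, z) = (x(t := x t + x c), z(c := z c + z t))"

text \<open>A circuit is a gate list, first gate applied first.\<close>
definition conj_circ :: "gate list \<Rightarrow> pauli \<Rightarrow> pauli" where
  "conj_circ gs p = fold conj_gate gs p"

text \<open>Depth: gates sharing a qubit cannot run in parallel, gates on disjoint qubits can;
  ASAP layering (length of the longest dependency chain).\<close>
fun gate_qubits :: "gate \<Rightarrow> nat set" where
  "gate_qubits (Hd j) = {j}"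
| "gate_qubits (Ph j) = {j}"
| "gate_qubits (CX c t) = {c, t}"

fun sched :: "(nat \<Rightarrow> nat) \<Rightarrow> gate list \<Rightarrow> (nat \<Rightarrow> nat)" where
  "sched t [] = t"
| "sched t (g # gs) =
     sched (let d = Suc (Max (t ` gate_qubits g)) in (\<lambda>q. if q \<in> gate_qubits g then d else t q)) gs"

definition depth :: "gate list \<Rightarrow> nat" where
  "depth gs = Max (insert 0 (sched (\<lambda>_. 0) gs ` (\<Union>g\<in>set gs. gate_qubits g)))"

definition active :: "nat \<Rightarrow> pauli set \<Rightarrow> nat set" where
  "active n S = {j. j < n \<and> (\<exists>p\<in>S. fst p j \<noteq> 0)}"

definition restr :: "nat set \<Rightarrow> pauli \<Rightarrow> pauli" where
  "restr A p = ((\<lambda>j. if j \<in> A then fst p j else 0), (\<lambda>j. if j \<in> A then snd p j else 0))"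

text \<open>Step 2, logarithmic-depth version.  With 0-based lists, one round applies
  CNOT(Q!(2i+1), Q!(2i)) and keeps the elements at even positions.\<close>
fun cnot_round :: "nat list \<Rightarrow> gate list" where
  "cnot_round (a # b # rest) = CX b a # cnot_round rest"
| "cnot_round _ = []"

fun keep_targets :: "nat list \<Rightarrow> nat list" where
  "keep_targets (a # b # rest) = a # keep_targets rest"
| "keep_targets xs = xs"

fun cnot_tree_fuel :: "nat \<Rightarrow> nat list \<Rightarrow> gate list" where
  "cnot_tree_fuel 0 Q = []"
| "cnot_tree_fuel (Suc k) Q =
     (if length Q \<le> 1 then [] else cnot_round Q @ cnot_tree_fuel k (keep_targets Q))"

definition cnot_tree :: "nat list \<Rightarrow> gate list" where
  "cnot_tree Q = cnot_tree_fuel (length Q) Q"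

definition step1 :: "(nat \<Rightarrow> bit) \<Rightarrow> (nat \<Rightarrow> bit) \<Rightarrow> nat list \<Rightarrow> gate list" where
  "step1 v w Q = concat (map (\<lambda>j. if v j = 0 \<and> w j = 1 then [Hd j]
                                  else if v j = 1 \<and> w j = 1 then [Ph j, Hd j] else []) Q)"

definition stage_gates :: "(nat \<Rightarrow> bit) \<Rightarrow> (nat \<Rightarrow> bit) \<Rightarrow> nat list \<Rightarrow> gate list" where
  "stage_gates v w Q = step1 v w Q @ cnot_tree Q"

text \<open>A stage: independent generating set T of the restricted operators (r = card T),
  null vector (v,w) of the tableau of T, of symplectic weight \<le> r + 1, and an
  enumeration Q of its support.\<close>
type_synonym stage = "pauli set \<times> (nat \<Rightarrow> bit) \<times> (nat \<Rightarrow> bit) \<times> nat list"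

definition stage_ok :: "nat \<Rightarrow> pauli set \<Rightarrow> stage \<Rightarrow> bool" where
  "stage_ok n S st = (case st of (T, v, w, Q) \<Rightarrow>
     (let A = active n S in
        A \<noteq> {} \<and>
        finite T \<and> f2indep T \<and> f2span T = f2span (restr A ` S) \<and>
        (\<forall>j. j \<notin> A \<longrightarrow> v j = 0 \<and> w j = 0) \<and>
        (\<exists>j\<in>A. v j \<noteq> 0 \<or> w j \<noteq> 0) \<and>
        (\<forall>p\<in>T. (\<Sum>j\<in>A. fst p j * v j + snd p j * w j) = 0) \<and>
        card {j\<in>A. v j \<noteq> 0 \<or> w j \<noteq> 0} \<le> card T + 1 \<and>
        distinct Q \<and> set Q = {j\<in>A. v j \<noteq> 0 \<or> w j \<noteq> 0}))"

definition stage_circ :: "stage \<Rightarrow> gate list" where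
  "stage_circ st = (case st of (T, v, w, Q) \<Rightarrow> stage_gates v w Q)"

definition stage_rank :: "stage \<Rightarrow> nat" where
  "stage_rank st = (case st of (T, v, w, Q) \<Rightarrow> card T)"

fun partial_run :: "nat \<Rightarrow> pauli set \<Rightarrow> stage list \<Rightarrow> bool" where
  "partial_run n S [] = True"
| "partial_run n S (st # rest) =
     (stage_ok n S st \<and> partial_run n (conj_circ (stage_circ st) ` S) rest)"

fun complete_run :: "nat \<Rightarrow> pauli set \<Rightarrow> stage list \<Rightarrow> bool" where
  "complete_run n S [] = (active n S = {})"
| "complete_run n S (st # rest) =
     (stage_ok n S st \<and> complete_run n (conj_circ (stage_circ st) ` S) rest)"

definition run_circ :: "stage list \<Rightarrow> gate list" where
  "run_circ R = concat (map stage_circ R)"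

end

theory Submission
  imports Defs "HOL-Library.Function_Algebras" "HOL-Library.Product_Plus"
begin

declare add_bit_eq_xor[simp del] mult_bit_eq_and[simp del]

lemma sum_fun_apply: "(\<Sum>x\<in>A. f x) j = (\<Sum>x\<in>A. (f x :: 'a \<Rightarrow> 'b::comm_monoid_add) j)"
  by (induct A rule: infinite_finite_induct) auto

definition psc :: "bit \<Rightarrow> pauli \<Rightarrow> pauli" where "psc c p = (\<lambda>j. c * fst p j, \<lambda>j. c * snd p j)"
definition fsc :: "bit \<Rightarrow> ('a \<Rightarrow> bit) \<Rightarrow> ('a \<Rightarrow> bit)" where "fsc c f = (\<lambda>x. c * f x)"

interpretation PV: vector_space psc
  by unfold_locales (auto simp: psc_def algebra_simps fun_eq_iff)

interpretation FV: vector_space fsc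
  by unfold_locales (auto simp: fsc_def algebra_simps fun_eq_iff)

lemma psc01: "psc 0 p = 0" "psc 1 p = p" by (auto simp: psc_def fun_eq_iff prod_eq_iff)
lemma fsc01: "fsc 0 p = 0" "fsc 1 p = p" by (auto simp: fsc_def fun_eq_iff)

lemma vsum_eq: "vsum T = sum id T"
  by (simp add: vsum_def prod_eq_iff fst_sum snd_sum fun_eq_iff sum_fun_apply)

lemma bit_cases': "(c::bit) = 0 \<or> c = 1" by (cases c) auto

lemma psc_sum: "finite t \<Longrightarrow> (\<Sum>v\<in>t. psc (u v) v) = sum id {v\<in>t. u v = 1}"
proof -
  have h: "(\<Sum>v\<in>t. psc (u v) v) = (\<Sum>v\<in>t. if u v = 1 then v else 0)"
    by (rule sum.cong) (auto simp: psc01 split: bit.split)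
  assume "finite t" then show ?thesis using h by (simp add: sum.inter_filter[symmetric])
qed

lemma f2span_eq: "f2span S = PV.span S"
proof
  show "f2span S \<subseteq> PV.span S"
  proof
    fix x assume "x \<in> f2span S"
    then obtain T where "finite T" "T \<subseteq> S" "x = sum id T" by (auto simp: f2span_def vsum_eq)
    then show "x \<in> PV.span S" using PV.span_sum[of T id S] PV.span_base[of _ S] by auto
  qed
  show "PV.span S \<subseteq> f2span S"
  proof
    fix x assume "x \<in> PV.span S"
    then obtain t u where "finite t" "t \<subseteq> S" "x = (\<Sum>v\<in>t. psc (u v) v)"
      unfolding PV.span_explicit by blast
    then show "x \<in> f2span S" unfolding f2span_def psc_sum[OF \<open>finite t\<close>] vsum_eq
      by (intro CollectI exI[of _ "{v\<in>t. u v = 1}"]) auto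
  qed
qed

lemma f2indep_eq: "f2indep S = PV.independent S"
proof
  assume H: "f2indep S"
  show "PV.independent S"
  proof
    assume "PV.dependent S"
    then obtain t u v where "finite t" "t \<subseteq> S" "(\<Sum>v\<in>t. psc (u v) v) = 0" "v \<in> t" "u v \<noteq> 0"
      unfolding PV.dependent_explicit by blast
    then show False using H unfolding f2indep_def psc_sum[OF \<open>finite t\<close>] vsum_eq
      by (auto simp: zero_prod_def zero_fun_def elim!: allE[of _ "{v\<in>t. u v = 1}"])
  qed
next
  assume H: "PV.independent S"
  show "f2indep S" unfolding f2indep_def
  proof (intro allI impI notI)
    fix T assume T: "finite T \<and> T \<subseteq> S \<and> T \<noteq> {}" and z: "vsum T = (\<lambda>_. 0, \<lambda>_. 0)"
    have "(\<Sum>v\<in>T. psc ((\<lambda>_. 1) v) v) = 0" using z by (simp add: psc01 vsum_eq zero_prod_def zero_fun_def)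
    then show False using H T PV.independentD[of S T "\<lambda>_. 1"] by auto
  qed
qed

lemma bit_add_self[simp]: "(a::bit) + a = 0" by (cases a) auto

lemma gate_untouched: "j \<notin> gate_qubits g \<Longrightarrow> fst (conj_gate g p) j = fst p j \<and> snd (conj_gate g p) j = snd p j"
  by (cases p; cases g) auto

lemma fold_untouched: "j \<notin> (\<Union>g\<in>set gs. gate_qubits g) \<Longrightarrow>
   fst (fold conj_gate gs p) j = fst p j \<and> snd (fold conj_gate gs p) j = snd p j"
  by (induction gs arbitrary: p) (auto dest: gate_untouched)

lemma keep_set: "set (keep_targets Q) \<subseteq> set Q"
  by (induction Q rule: keep_targets.induct) auto
lemma keep_distinct: "distinct Q \<Longrightarrow> distinct (keep_targets Q)"
  by (induction Q rule: keep_targets.induct) (use keep_set in auto)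
lemma keep_hd: "Q \<noteq> [] \<Longrightarrow> hd (keep_targets Q) = hd Q"
  by (induction Q rule: keep_targets.induct) auto
lemma keep_ne: "Q \<noteq> [] \<Longrightarrow> keep_targets Q \<noteq> []"
  by (induction Q rule: keep_targets.induct) auto
lemma keep_len: "length (keep_targets Q) \<le> (length Q + 1) div 2"
  by (induction Q rule: keep_targets.induct) auto
lemma keep_len_less: "2 \<le> length Q \<Longrightarrow> length (keep_targets Q) < length Q"
  using keep_len[of Q] by auto

fun wfg :: "gate \<Rightarrow> bool" where
  "wfg (CX c t) = (c \<noteq> t)" | "wfg _ = True"

lemma round_gates: "distinct Q \<Longrightarrow> g \<in> set (cnot_round Q) \<Longrightarrow> gate_qubits g \<subseteq> set Q \<and> wfg g"
  by (induction Q rule: cnot_round.induct) auto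

lemma tree_gates: "distinct Q \<Longrightarrow> g \<in> set (cnot_tree_fuel k Q) \<Longrightarrow> gate_qubits g \<subseteq> set Q \<and> wfg g"
proof (induction k arbitrary: Q)
  case 0 then show ?case by simp
next
  case (Suc k)
  show ?case
  proof (cases "length Q \<le> 1")
    case True then show ?thesis using Suc by simp
  next
    case False
    then have "g \<in> set (cnot_round Q) \<or> g \<in> set (cnot_tree_fuel k (keep_targets Q))" using Suc by simp
    then show ?thesis
      using round_gates[OF Suc(2)] Suc.IH[OF keep_distinct[OF Suc(2)]] keep_set[of Q] by blast
  qed
qed

lemma step1_gates: "g \<in> set (step1 v w Q) \<Longrightarrow> gate_qubits g \<subseteq> set Q \<and> wfg g"
  by (induction Q) (auto simp: step1_def split: if_splits)

lemma round_sum: "distinct Q \<Longrightarrow>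
  (\<Sum>j\<in>set (keep_targets Q). fst (fold conj_gate (cnot_round Q) p) j) = (\<Sum>j\<in>set Q. fst p j)"
proof (induction Q arbitrary: p rule: cnot_round.induct)
  case (1 a b rest)
  let ?p1 = "conj_gate (CX b a) p"
  have d: "a \<noteq> b" "a \<notin> set rest" "b \<notin> set rest" "distinct rest" using 1(2) by auto
  have ua: "a \<notin> (\<Union>g\<in>set (cnot_round rest). gate_qubits g)" using round_gates[OF d(4)] d(2) by blast
  have p1a: "fst ?p1 a = fst p a + fst p b" by (cases p) (simp)
  have p1r: "\<And>j. j \<in> set rest \<Longrightarrow> fst ?p1 j = fst p j" using d by (cases p) auto
  have "a \<notin> set (keep_targets rest)" using keep_set d(2) by blast
  then have "(\<Sum>j\<in>set (keep_targets (a # b # rest)). fst (fold conj_gate (cnot_round (a # b # rest)) p) j)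
     = fst (fold conj_gate (cnot_round rest) ?p1) a + (\<Sum>j\<in>set (keep_targets rest). fst (fold conj_gate (cnot_round rest) ?p1) j)"
    by simp
  also have "\<dots> = fst p a + fst p b + (\<Sum>j\<in>set rest. fst ?p1 j)"
    using 1(1)[OF d(4)] fold_untouched[OF ua] p1a by simp
  also have "\<dots> = fst p a + fst p b + (\<Sum>j\<in>set rest. fst p j)"
    using p1r by simp
  also have "\<dots> = (\<Sum>j\<in>set (a # b # rest). fst p j)" using d by (simp add: add.assoc)
  finally show ?case .
qed auto

lemma tree_sum: "distinct Q \<Longrightarrow> Q \<noteq> [] \<Longrightarrow> length Q \<le> k \<Longrightarrow>
  fst (fold conj_gate (cnot_tree_fuel k Q) p) (hd Q) = (\<Sum>j\<in>set Q. fst p j)"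
proof (induction k arbitrary: Q p)
  case 0 then show ?case by simp
next
  case (Suc k)
  show ?case
  proof (cases "length Q \<le> 1")
    case True
    then obtain a where "Q = [a]" using Suc(3) by (cases Q) auto
    then show ?thesis by simp
  next
    case False
    have "fst (fold conj_gate (cnot_tree_fuel (Suc k) Q) p) (hd Q)
       = fst (fold conj_gate (cnot_tree_fuel k (keep_targets Q)) (fold conj_gate (cnot_round Q) p)) (hd (keep_targets Q))"
      using False keep_hd[OF Suc(3)] by simp
    also have "\<dots> = (\<Sum>j\<in>set (keep_targets Q). fst (fold conj_gate (cnot_round Q) p) j)"
      using Suc.IH[OF keep_distinct[OF Suc(2)] keep_ne[OF Suc(3)]] keep_len_less[of Q] False Suc(4) by simp
    also have "\<dots> = (\<Sum>j\<in>set Q. fst p j)" by (rule round_sum[OF Suc(2)])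
    finally show ?thesis .
  qed
qed

definition g1 :: "(nat \<Rightarrow> bit) \<Rightarrow> (nat \<Rightarrow> bit) \<Rightarrow> nat \<Rightarrow> gate list" where
  "g1 v w j = (if v j = 0 \<and> w j = 1 then [Hd j] else if v j = 1 \<and> w j = 1 then [Ph j, Hd j] else [])"

lemma step1_cons: "step1 v w (j # Q) = g1 v w j @ step1 v w Q"
  by (simp add: step1_def g1_def)

lemma step1_effect: "distinct Q \<Longrightarrow> j \<in> set Q \<Longrightarrow> (\<forall>i\<in>set Q. v i \<noteq> 0 \<or> w i \<noteq> 0) \<Longrightarrow>
  fst (fold conj_gate (step1 v w Q) p) j = v j * fst p j + w j * snd p j"
proof (induction Q arbitrary: p)
  case Nil then show ?case by simp
next
  case (Cons a Q)
  let ?p1 = "fold conj_gate (g1 v w a) p"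
  show ?case
  proof (cases "j = a")
    case True
    have "a \<notin> (\<Union>g\<in>set (step1 v w Q). gate_qubits g)" using step1_gates Cons(2) by fastforce
    then have "fst (fold conj_gate (step1 v w (a # Q)) p) a = fst ?p1 a"
      using fold_untouched by (simp add: step1_cons)
    also have "\<dots> = v a * fst p a + w a * snd p a"
      using Cons(4) by (cases p; cases "v a"; cases "w a") (auto simp: g1_def)
    finally show ?thesis using True by simp
  next
    case False
    then have "j \<notin> (\<Union>g\<in>set (g1 v w a). gate_qubits g)" by (auto simp: g1_def)
    then have "fst ?p1 j = fst p j \<and> snd ?p1 j = snd p j" by (rule fold_untouched)
    then show ?thesis using Cons False by (simp add: step1_cons)
  qed
qed

lemma additive_sum0: "(\<And>a b. (f::'a::ab_group_add \<Rightarrow> _) (a + b) = f a + f b) \<Longrightarrow> (\<And>u. u \<in> U \<Longrightarrow> f u = 0) \<Longrightarrow> f (sum id U) = (0::'b::ab_group_add)"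
proof -
  assume h: "\<And>a b. f (a + b) = f a + f b" and z: "\<And>u. u \<in> U \<Longrightarrow> f u = 0"
  interpret additive f by unfold_locales (rule h)
  show ?thesis using z by (simp add: sum)
qed

lemma restr_in_span: "p \<in> S \<Longrightarrow> restr A p \<in> f2span (restr A ` S)"
  unfolding f2span_eq by (rule PV.span_base) auto

lemma f2span_vsum: "x \<in> f2span T \<Longrightarrow> \<exists>U. finite U \<and> U \<subseteq> T \<and> x = sum id U"
  by (auto simp: f2span_def vsum_eq)

lemma null_S:
  assumes ok: "stage_ok n S (T,v,w,Q)" and p: "p \<in> S"
  shows "(\<Sum>j\<in>active n S. fst p j * v j + snd p j * w j) = 0"
proof -
  let ?A = "active n S"
  define lin where "lin q = (\<Sum>j\<in>?A. fst q j * v j + snd q j * w j)" for q :: pauli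
  have add: "lin (a + b) = lin a + lin b" for a b
    unfolding lin_def by (simp add: algebra_simps sum.distrib)
  have T0: "\<And>u. u \<in> T \<Longrightarrow> lin u = 0" using ok by (auto simp: stage_ok_def lin_def Let_def)
  have "restr ?A p \<in> f2span T" using ok restr_in_span[OF p, of ?A] by (auto simp: stage_ok_def Let_def)
  then obtain U where U: "U \<subseteq> T" "restr ?A p = sum id U" using f2span_vsum by blast
  have "lin (restr ?A p) = 0" unfolding U(2) by (rule additive_sum0[of lin, OF add]) (use T0 U(1) in auto)
  moreover have "lin (restr ?A p) = lin p" unfolding lin_def restr_def by (rule sum.cong) auto
  ultimately show ?thesis by (simp add: lin_def)
qed

lemma stage_facts:
  assumes ok: "stage_ok n S (T,v,w,Q)"
  shows "Q \<noteq> []" "distinct Q" "set Q \<subseteq> active n S" "active n S \<subseteq> {..<n}"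
    "\<And>j. j \<in> set Q \<Longrightarrow> v j \<noteq> 0 \<or> w j \<noteq> 0"
    "\<And>j. j \<notin> set Q \<Longrightarrow> j \<in> active n S \<Longrightarrow> v j = 0 \<and> w j = 0"
  using ok by (auto simp: stage_ok_def Let_def active_def)

lemma stage_gates_ok:
  assumes ok: "stage_ok n S (T,v,w,Q)" and g: "g \<in> set (stage_circ (T,v,w,Q))"
  shows "gate_qubits g \<subseteq> set Q \<and> wfg g"
proof -
  have "g \<in> set (step1 v w Q) \<or> g \<in> set (cnot_tree_fuel (length Q) Q)"
    using g by (simp add: stage_circ_def stage_gates_def cnot_tree_def)
  then show ?thesis
  proof
    assume "g \<in> set (step1 v w Q)" then show ?thesis by (rule step1_gates)
  next
    assume "g \<in> set (cnot_tree_fuel (length Q) Q)" then show ?thesis by (rule tree_gates[OF stage_facts(2)[OF ok]])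
  qed
qed

lemma stage_untouched:
  assumes ok: "stage_ok n S (T,v,w,Q)" and j: "j \<notin> set Q"
  shows "fst (conj_circ (stage_circ (T,v,w,Q)) p) j = fst p j \<and> snd (conj_circ (stage_circ (T,v,w,Q)) p) j = snd p j"
  unfolding conj_circ_def using stage_gates_ok[OF ok] j by (intro fold_untouched) blast

lemma stage_kills:
  assumes ok: "stage_ok n S (T,v,w,Q)" and p: "p \<in> S"
  shows "fst (conj_circ (stage_circ (T,v,w,Q)) p) (hd Q) = 0"
proof -
  note F = stage_facts[OF ok]
  let ?p1 = "fold conj_gate (step1 v w Q) p"
  have "fst (conj_circ (stage_circ (T,v,w,Q)) p) (hd Q) = fst (fold conj_gate (cnot_tree_fuel (length Q) Q) ?p1) (hd Q)"
    by (simp add: conj_circ_def stage_circ_def stage_gates_def cnot_tree_def)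
  also have "\<dots> = (\<Sum>j\<in>set Q. fst ?p1 j)" using tree_sum F(1,2) by simp
  also have "\<dots> = (\<Sum>j\<in>set Q. v j * fst p j + w j * snd p j)"
    by (rule sum.cong) (use step1_effect F(2,5) in auto)
  also have "\<dots> = (\<Sum>j\<in>active n S. fst p j * v j + snd p j * w j)"
  proof (rule sum.mono_neutral_cong_left)
    show "finite (active n S)" using F(4) finite_subset by blast
  qed (use F(3,6) in \<open>auto simp: mult.commute\<close>)
  also have "\<dots> = 0" by (rule null_S[OF ok p])
  finally show ?thesis .
qed

lemma active_decrease:
  assumes ok: "stage_ok n S st"
  shows "card (active n (conj_circ (stage_circ st) ` S)) < card (active n S)"
proof -
  obtain T v w Q where st: "st = (T,v,w,Q)" by (cases st) auto
  note ok' = ok[unfolded st]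
  note F = stage_facts[OF ok']
  have sub: "active n (conj_circ (stage_circ st) ` S) \<subseteq> active n S - {hd Q}"
  proof
    fix j assume "j \<in> active n (conj_circ (stage_circ st) ` S)"
    then obtain p where p: "p \<in> S" "j < n" "fst (conj_circ (stage_circ st) p) j \<noteq> 0" by (auto simp: active_def)
    have "j \<noteq> hd Q" using stage_kills[OF ok' p(1)] p(3) st by auto
    moreover have "j \<in> active n S"
    proof (cases "j \<in> set Q")
      case True then show ?thesis using F(3) by auto
    next
      case False then show ?thesis using stage_untouched[OF ok' False, of p] p st by (auto simp: active_def)
    qed
    ultimately show "j \<in> active n S - {hd Q}" by auto
  qed
  have hm: "hd Q \<in> active n S" using F(1,3) hd_in_set by blast
  have fin: "finite (active n S)" using F(4) finite_subset by blast
  have "card (active n S - {hd Q}) < card (active n S)" by (rule card_Diff1_less[OF fin hm])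
  moreover have "card (active n (conj_circ (stage_circ st) ` S)) \<le> card (active n S - {hd Q})"
    using sub \<open>finite (active n S)\<close> by (intro card_mono) auto
  ultimately show ?thesis by linarith
qed

lemma bit_ph: "(a::bit)*(b+c) + (d+a)*c = a*b + d*c"
  by (cases a; cases b; cases c; cases d) simp_all

lemma symp_gate:
  assumes w: "wfg g" and q: "gate_qubits g \<subseteq> {..<n}"
  shows "symp n (conj_gate g p) (conj_gate g q) = symp n p q"
proof -
  obtain xp zp where P: "p = (xp, zp)" by (cases p)
  obtain xq zq where Qq: "q = (xq, zq)" by (cases q)
  show ?thesis
  proof (cases g)
    case (Hd j0)
    show ?thesis unfolding symp_def P Qq Hd
      by (rule sum.cong) (auto simp: algebra_simps)
  next
    case (Ph j0)
    show ?thesis unfolding symp_def P Qq Ph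
      by (rule sum.cong) (auto simp: bit_ph)
  next
    case (CX c t)
    have ct: "c \<noteq> t" "c < n" "t < n" using w q CX by auto
    define d where "d = xp c * zq t + zp t * xq c"
    have pt: "fst (conj_gate g p) j * snd (conj_gate g q) j + snd (conj_gate g p) j * fst (conj_gate g q) j
       = (fst p j * snd q j + snd p j * fst q j) + (if j \<in> {c,t} then d else 0)" for j
      using ct unfolding P Qq CX d_def by (auto simp: algebra_simps)
    have "symp n (conj_gate g p) (conj_gate g q) = symp n p q + (\<Sum>j<n. if j \<in> {c,t} then d else 0)"
      unfolding symp_def pt by (simp add: sum.distrib)
    also have "(\<Sum>j<n. if j \<in> {c,t} then d else 0) = (\<Sum>j\<in>{c,t}. d)"
      using ct by (intro sum.mono_neutral_cong_right) auto
    also have "\<dots> = 0" using ct by simp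
    finally show ?thesis by simp
  qed
qed

lemma symp_fold: "(\<forall>g\<in>set gs. wfg g \<and> gate_qubits g \<subseteq> {..<n}) \<Longrightarrow>
  symp n (fold conj_gate gs p) (fold conj_gate gs q) = symp n p q"
  by (induction gs arbitrary: p q) (auto simp: symp_gate)

lemma conj_gate_add: "conj_gate g (a + b) = conj_gate g a + conj_gate g b"
  by (cases a; cases b; cases g) (auto simp: fun_eq_iff algebra_simps)

lemma conj_circ_add: "conj_circ gs (a + b) = conj_circ gs a + conj_circ gs b"
  unfolding conj_circ_def by (induction gs arbitrary: a b) (auto simp: conj_gate_add)

lemma restr_add: "restr A (a + b) = restr A a + restr A b"
  by (auto simp: restr_def fun_eq_iff)

lemma additive_span_image:
  assumes h: "\<And>a b. f (a + b) = f a + f b"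
  shows "f ` PV.span G \<subseteq> PV.span (f ` G)"
proof
  interpret additive f by unfold_locales (rule h)
  fix y assume "y \<in> f ` PV.span G"
  then obtain x where x: "x \<in> PV.span G" "y = f x" by blast
  then obtain U where U: "finite U" "U \<subseteq> G" "x = sum id U" using f2span_vsum f2span_eq by blast
  have "y = (\<Sum>u\<in>U. f u)" using x U by (simp add: sum)
  also have "\<dots> \<in> PV.span (f ` G)" using U by (intro PV.span_sum PV.span_base) auto
  finally show "y \<in> PV.span (f ` G)" .
qed

definition invar :: "nat \<Rightarrow> nat \<Rightarrow> pauli set \<Rightarrow> bool" where
  "invar n r S \<longleftrightarrow> (\<forall>p\<in>S. pauli_on n p) \<and> (\<forall>p\<in>S. \<forall>q\<in>S. symp n p q = 0) \<and>
     (\<exists>G. finite G \<and> card G \<le> r \<and> S \<subseteq> PV.span G)"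

lemma invar_step:
  assumes ok: "stage_ok n S st" and I: "invar n r S"
  shows "invar n r (conj_circ (stage_circ st) ` S)"
proof -
  obtain T v w Q where st: "st = (T,v,w,Q)" by (cases st) auto
  note ok' = ok[unfolded st]
  note F = stage_facts[OF ok']
  have gq: "\<forall>g\<in>set (stage_circ st). wfg g \<and> gate_qubits g \<subseteq> {..<n}"
    using stage_gates_ok[OF ok'] F(3,4) st by blast
  let ?f = "conj_circ (stage_circ st)"
  have "\<forall>p\<in>?f ` S. pauli_on n p"
  proof
    fix p' assume "p' \<in> ?f ` S"
    then obtain p where p: "p \<in> S" "p' = ?f p" by blast
    have "j \<notin> set Q" if "j \<ge> n" for j using F(3,4) that by auto
    then show "pauli_on n p'" using stage_untouched[OF ok'] p I st
      by (auto simp: invar_def pauli_on_def)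
  qed
  moreover have "\<forall>p\<in>?f ` S. \<forall>q\<in>?f ` S. symp n p q = 0"
    using I symp_fold[OF gq] by (auto simp: invar_def conj_circ_def)
  moreover have "\<exists>G. finite G \<and> card G \<le> r \<and> ?f ` S \<subseteq> PV.span G"
  proof -
    obtain G where G: "finite G" "card G \<le> r" "S \<subseteq> PV.span G" using I by (auto simp: invar_def)
    have "?f ` S \<subseteq> ?f ` PV.span G" using G(3) by blast
    also have "\<dots> \<subseteq> PV.span (?f ` G)" by (rule additive_span_image) (rule conj_circ_add)
    finally show ?thesis using G card_image_le[OF G(1), of ?f] by (intro exI[of _ "?f ` G"]) auto
  qed
  ultimately show ?thesis by (simp add: invar_def)
qed

lemma rank_bound:
  assumes I: "invar n r S" and ok: "stage_ok n S (T,v,w,Q)"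
  shows "card T \<le> r"
proof -
  let ?A = "active n S"
  obtain G where G: "finite G" "card G \<le> r" "S \<subseteq> PV.span G" using I by (auto simp: invar_def)
  have T: "finite T" "PV.independent T" "PV.span T = PV.span (restr ?A ` S)"
    using ok by (auto simp: stage_ok_def Let_def f2span_eq f2indep_eq)
  have "restr ?A ` S \<subseteq> restr ?A ` PV.span G" using G(3) by blast
  also have "\<dots> \<subseteq> PV.span (restr ?A ` G)" by (rule additive_span_image) (rule restr_add)
  finally have "PV.span (restr ?A ` S) \<subseteq> PV.span (restr ?A ` G)"
    using PV.span_mono PV.span_span by metis
  then have "T \<subseteq> PV.span (restr ?A ` G)" using T(3) PV.span_superset by blast
  then have "card T \<le> card (restr ?A ` G)" using PV.independent_span_bound[OF _ T(2)] G(1) by blast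
  also have "\<dots> \<le> card G" by (rule card_image_le[OF G(1)])
  finally show ?thesis using G(2) by simp
qed

lemma T_nonempty:
  assumes ok: "stage_ok n S (T,v,w,Q)"
  shows "T \<noteq> {}"
proof
  assume T0: "T = {}"
  let ?A = "active n S"
  obtain j where j: "j \<in> ?A" using ok by (auto simp: stage_ok_def Let_def)
  then obtain p where p: "p \<in> S" "fst p j \<noteq> 0" by (auto simp: active_def)
  have "restr ?A p \<in> f2span T" using ok restr_in_span[OF p(1), of ?A] by (auto simp: stage_ok_def Let_def)
  then have "restr ?A p = 0" using T0 by (simp add: f2span_eq)
  then have "fst (restr ?A p) j = 0" by simp
  then show False using p j by (simp add: restr_def)
qed

lemma null_exists:
  fixes A :: "nat set" and B :: "pauli set"
  assumes finA: "finite A" and finB: "finite B" and neB: "B \<noteq> {}" and n0: "0 \<notin> B"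
    and supp: "\<forall>q\<in>B. \<forall>j. j \<notin> A \<longrightarrow> fst q j = 0 \<and> snd q j = 0"
    and sy: "\<forall>p\<in>B. \<forall>q\<in>B. (\<Sum>j\<in>A. fst p j * snd q j + snd p j * fst q j) = 0"
  shows "\<exists>v w. (\<forall>j. j \<notin> A \<longrightarrow> v j = 0 \<and> w j = 0) \<and> (\<exists>j\<in>A. v j \<noteq> 0 \<or> w j \<noteq> 0) \<and>
    (\<forall>p\<in>B. (\<Sum>j\<in>A. fst p j * v j + snd p j * w j) = 0) \<and>
    card {j\<in>A. v j \<noteq> 0 \<or> w j \<noteq> 0} \<le> card B + 1"
proof (cases "card A \<le> card B + 1")
  case True
  obtain q where q: "q \<in> B" using neB by blast
  have "q \<noteq> 0" using q n0 by blast
  then obtain j where j: "fst q j \<noteq> 0 \<or> snd q j \<noteq> 0" by (auto simp: prod_eq_iff fun_eq_iff)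
  then have "j \<in> A" using supp q by blast
  show ?thesis
  proof (rule exI[of _ "snd q"], rule exI[of _ "fst q"], intro conjI)
    show "\<forall>j. j \<notin> A \<longrightarrow> snd q j = 0 \<and> fst q j = 0" using supp q by blast
    show "\<exists>j\<in>A. snd q j \<noteq> 0 \<or> fst q j \<noteq> 0" using j \<open>j \<in> A\<close> by blast
    show "\<forall>p\<in>B. (\<Sum>j\<in>A. fst p j * snd q j + snd p j * fst q j) = 0" using sy q by blast
    have "card {j\<in>A. snd q j \<noteq> 0 \<or> fst q j \<noteq> 0} \<le> card A" using finA by (intro card_mono) auto
    then show "card {j\<in>A. snd q j \<noteq> 0 \<or> fst q j \<noteq> 0} \<le> card B + 1" using True by linarith
  qed
next
  case False
  obtain B' where B': "B' \<subseteq> A" "card B' = card B + 1" "finite B'"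
    using False obtain_subset_with_card_n[of "card B + 1" A] by force
  have cB: "card B \<ge> 1" using finB neB by (simp add: Suc_leI card_gt_0_iff)
  define col where "col j = (\<lambda>p. if p \<in> B then fst p j else (0::bit))" for j
  show ?thesis
  proof (cases "inj_on col B'")
    case False
    then obtain j1 j2 where jj: "j1 \<in> B'" "j2 \<in> B'" "j1 \<noteq> j2" "col j1 = col j2"
      unfolding inj_on_def by blast
    define v where "v j = (if j = j1 \<or> j = j2 then 1 else (0::bit))" for j
    show ?thesis
    proof (rule exI[of _ v], rule exI[of _ "\<lambda>_. 0"], intro conjI)
      show "\<forall>j. j \<notin> A \<longrightarrow> v j = 0 \<and> (0::bit) = 0" using jj B' by (auto simp: v_def)
      show "\<exists>j\<in>A. v j \<noteq> 0 \<or> (0::bit) \<noteq> 0" using jj B' by (auto simp: v_def)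
      show "\<forall>p\<in>B. (\<Sum>j\<in>A. fst p j * v j + snd p j * 0) = 0"
      proof
        fix p assume p: "p \<in> B"
        have e: "fst p j1 = fst p j2" using fun_cong[OF jj(4), of p] p unfolding col_def by simp
        have "(\<Sum>j\<in>A. fst p j * v j + snd p j * 0) = (\<Sum>j\<in>{j1,j2}. fst p j)"
          using jj B' finA by (intro sum.mono_neutral_cong_right) (auto simp: v_def)
        also have "\<dots> = 0" using jj(3) e by simp
        finally show "(\<Sum>j\<in>A. fst p j * v j + snd p j * 0) = 0" .
      qed
      have "{j\<in>A. v j \<noteq> 0 \<or> (0::bit) \<noteq> 0} = {j1, j2}" using jj B' by (auto simp: v_def)
      then show "card {j\<in>A. v j \<noteq> 0 \<or> (0::bit) \<noteq> 0} \<le> card B + 1" using jj(3) cB by simp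
    qed
  next
    case True
    define dl where "dl t = (\<lambda>p. if p = t then 1 else (0::bit))" for t :: pauli
    have colspan: "col j \<in> FV.span (dl ` B)" for j
    proof -
      have "col j = (\<Sum>t\<in>B. fsc (fst t j) (dl t))"
      proof
        fix p
        have "(\<Sum>t\<in>B. fsc (fst t j) (dl t)) p = (\<Sum>t\<in>B. if p = t then fst t j else 0)"
          by (simp add: sum_fun_apply fsc_def dl_def if_distrib cong: if_cong)
        also have "\<dots> = col j p" using finB by (simp add: col_def)
        finally show "col j p = (\<Sum>t\<in>B. fsc (fst t j) (dl t)) p" by simp
      qed
      also have "\<dots> \<in> FV.span (dl ` B)"
        by (intro FV.span_sum FV.span_scale FV.span_base) auto
      finally show ?thesis .
    qed
    have cardc: "card (col ` B') = card B + 1" using card_image[OF True] B' by simp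
    have "FV.dependent (col ` B')"
    proof (rule ccontr)
      assume ind: "FV.independent (col ` B')"
      have "card (col ` B') \<le> card (dl ` B)"
        using FV.independent_span_bound[OF _ ind, of "dl ` B"] finB colspan by blast
      also have "\<dots> \<le> card B" using card_image_le[OF finB] by blast
      finally show False using cardc by simp
    qed
    then obtain u where u: "\<exists>c\<in>col ` B'. u c \<noteq> 0" "(\<Sum>c\<in>col ` B'. fsc (u c) c) = 0"
      using FV.dependent_finite[of "col ` B'"] B'(3) by blast
    define v where "v j = (if j \<in> B' then u (col j) else 0)" for j
    show ?thesis
    proof (rule exI[of _ v], rule exI[of _ "\<lambda>_. 0"], intro conjI)
      show "\<forall>j. j \<notin> A \<longrightarrow> v j = 0 \<and> (0::bit) = 0" using B' by (auto simp: v_def)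
      show "\<exists>j\<in>A. v j \<noteq> 0 \<or> (0::bit) \<noteq> 0" using u(1) B' by (auto simp: v_def)
      show "\<forall>p\<in>B. (\<Sum>j\<in>A. fst p j * v j + snd p j * 0) = 0"
      proof
        fix p assume p: "p \<in> B"
        have "0 = (\<Sum>c\<in>col ` B'. fsc (u c) c) p" using u(2) by simp
        also have "\<dots> = (\<Sum>c\<in>col ` B'. u c * c p)" by (simp add: sum_fun_apply fsc_def)
        also have "\<dots> = (\<Sum>j\<in>B'. u (col j) * col j p)" by (rule sum.reindex[OF True, unfolded comp_def])
        also have "\<dots> = (\<Sum>j\<in>A. fst p j * v j + snd p j * 0)"
          using B' finA p by (intro sum.mono_neutral_cong_left) (auto simp: v_def col_def mult.commute)
        finally show "(\<Sum>j\<in>A. fst p j * v j + snd p j * 0) = 0" by simp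
      qed
      have "card {j\<in>A. v j \<noteq> 0 \<or> (0::bit) \<noteq> 0} \<le> card B'"
        using B' by (intro card_mono) (auto simp: v_def)
      then show "card {j\<in>A. v j \<noteq> 0 \<or> (0::bit) \<noteq> 0} \<le> card B + 1" using B' by simp
    qed
  qed
qed

definition sympA :: "nat set \<Rightarrow> pauli \<Rightarrow> pauli \<Rightarrow> bit" where
  "sympA A p q = (\<Sum>j\<in>A. fst p j * snd q j + snd p j * fst q j)"

lemma sympA_add1: "sympA A (a + b) q = sympA A a q + sympA A b q"
  by (simp add: sympA_def algebra_simps sum.distrib)
lemma sympA_add2: "sympA A p (a + b) = sympA A p a + sympA A p b"
  by (simp add: sympA_def algebra_simps sum.distrib)

lemma stage_exists:
  assumes I: "invar n r S" and ne: "active n S \<noteq> {}"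
  shows "\<exists>st. stage_ok n S st"
proof -
  let ?A = "active n S"
  let ?V = "restr ?A ` S"
  have Asub: "?A \<subseteq> {..<n}" by (auto simp: active_def)
  have finA: "finite ?A" using Asub finite_subset by blast
  obtain B where B: "B \<subseteq> ?V" "PV.independent B" "?V \<subseteq> PV.span B"
    using PV.maximal_independent_subset by blast
  have spB: "PV.span B = PV.span ?V"
    using B PV.span_mono PV.span_span by (metis subset_antisym)
  obtain G where G: "finite G" "card G \<le> r" "S \<subseteq> PV.span G" using I by (auto simp: invar_def)
  have "?V \<subseteq> restr ?A ` PV.span G" using G(3) by blast
  also have "\<dots> \<subseteq> PV.span (restr ?A ` G)" by (rule additive_span_image) (rule restr_add)
  finally have "PV.span ?V \<subseteq> PV.span (restr ?A ` G)" using PV.span_mono PV.span_span by metis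
  then have "B \<subseteq> PV.span (restr ?A ` G)" using spB PV.span_superset by blast
  then have finB: "finite B" using PV.independent_span_bound[OF _ B(2)] G(1) by blast
  have supp: "\<forall>q\<in>B. \<forall>j. j \<notin> ?A \<longrightarrow> fst q j = 0 \<and> snd q j = 0"
    using B(1) by (auto simp: restr_def)
  have gen: "sympA ?A (restr ?A s) (restr ?A s') = 0" if "s \<in> S" "s' \<in> S" for s s'
  proof -
    have "sympA ?A (restr ?A s) (restr ?A s') = symp n s s'"
      unfolding sympA_def symp_def
    proof (rule sum.mono_neutral_cong_left)
      show "\<forall>i\<in>{..<n} - ?A. fst s i * snd s' i + snd s i * fst s' i = 0"
        using that by (auto simp: active_def)
    qed (use Asub in \<open>auto simp: restr_def\<close>)
    then show ?thesis using I that by (simp add: invar_def)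
  qed
  have sy1: "sympA ?A (restr ?A s) q = 0" if s: "s \<in> S" and q: "q \<in> PV.span ?V" for s q
  proof -
    obtain U where U: "finite U" "U \<subseteq> ?V" "q = sum id U" using q f2span_vsum f2span_eq by blast
    show ?thesis unfolding U(3)
      by (rule additive_sum0[of "sympA ?A (restr ?A s)", OF sympA_add2]) (use U(2) gen s in blast)
  qed
  have sy: "sympA ?A p q = 0" if p: "p \<in> PV.span ?V" and q: "q \<in> PV.span ?V" for p q
  proof -
    obtain U where U: "finite U" "U \<subseteq> ?V" "p = sum id U" using p f2span_vsum f2span_eq by blast
    show ?thesis unfolding U(3)
      by (rule additive_sum0[of "\<lambda>p. sympA ?A p q", OF sympA_add1]) (use U(2) sy1 q in blast)
  qed
  have syB: "\<forall>p\<in>B. \<forall>q\<in>B. (\<Sum>j\<in>?A. fst p j * snd q j + snd p j * fst q j) = 0"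
    using sy[unfolded sympA_def] B(3) spB PV.span_superset by blast
  have neB: "B \<noteq> {}"
  proof
    assume "B = {}"
    obtain j where j: "j \<in> ?A" using ne by blast
    then obtain p where p: "p \<in> S" "fst p j \<noteq> 0" by (auto simp: active_def)
    have "restr ?A p \<in> PV.span B" using B(3) p(1) by blast
    then have "restr ?A p = 0" using \<open>B = {}\<close> by simp
    then have "fst (restr ?A p) j = 0" by simp
    then show False using p j by (simp add: restr_def)
  qed
  have n0: "0 \<notin> B" using B(2) PV.dependent_zero by blast
  obtain v w where vw: "\<forall>j. j \<notin> ?A \<longrightarrow> v j = 0 \<and> w j = 0" "\<exists>j\<in>?A. v j \<noteq> 0 \<or> w j \<noteq> 0"
    "\<forall>p\<in>B. (\<Sum>j\<in>?A. fst p j * v j + snd p j * w j) = 0"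
    "card {j\<in>?A. v j \<noteq> 0 \<or> w j \<noteq> 0} \<le> card B + 1"
    using null_exists[OF finA finB neB n0 supp syB] by blast
  define Q where "Q = sorted_list_of_set {j\<in>?A. v j \<noteq> 0 \<or> w j \<noteq> 0}"
  have "stage_ok n S (B, v, w, Q)"
    unfolding stage_ok_def Let_def prod.case
    using ne finB B(2) spB vw finA
    by (auto simp: f2indep_eq f2span_eq Q_def)
  then show ?thesis by blast
qed

definition post :: "stage list \<Rightarrow> pauli set \<Rightarrow> pauli set" where
  "post R S = fold (\<lambda>st S. conj_circ (stage_circ st) ` S) R S"

lemma complete_exists: "invar n r S \<Longrightarrow> \<exists>R. complete_run n S R"
proof (induction "card (active n S)" arbitrary: S rule: less_induct)
  case less
  show ?case
  proof (cases "active n S = {}")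
    case True
    then show ?thesis by (intro exI[of _ "[]"]) simp
  next
    case False
    obtain st where st: "stage_ok n S st" using stage_exists[OF less(2) False] by blast
    obtain R where "complete_run n (conj_circ (stage_circ st) ` S) R"
      using less(1)[OF active_decrease[OF st] invar_step[OF st less(2)]] by blast
    then show ?thesis using st by (intro exI[of _ "st # R"]) simp
  qed
qed

lemma partial_invar: "partial_run n S R \<Longrightarrow> invar n r S \<Longrightarrow> invar n r (post R S)"
  by (induction R arbitrary: S) (auto simp: post_def invar_step)

lemma complete_append: "partial_run n S R \<Longrightarrow> complete_run n (post R S) R' \<Longrightarrow> complete_run n S (R @ R')"
  by (induction R arbitrary: S) (auto simp: post_def)

lemma partial_len: "partial_run n S R \<Longrightarrow> length R \<le> card (active n S)"
proof (induction R arbitrary: S)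
  case (Cons st R)
  then show ?case using active_decrease[of n S st] by fastforce
qed simp

lemma card_active: "card (active n S) \<le> n"
proof -
  have "active n S \<subseteq> {..<n}" by (auto simp: active_def)
  then show ?thesis using card_mono[of "{..<n}"] by fastforce
qed

lemma complete_partial: "complete_run n S R \<Longrightarrow> partial_run n S R"
  by (induction R arbitrary: S) auto

lemma run_circ_cons: "run_circ (st # R) = stage_circ st @ run_circ R"
  by (simp add: run_circ_def)

lemma complete_diag: "complete_run n S R \<Longrightarrow> p \<in> S \<Longrightarrow> diagonal_on n (conj_circ (run_circ R) p)"
proof (induction R arbitrary: S p)
  case Nil
  then show ?case by (auto simp: run_circ_def conj_circ_def diagonal_on_def active_def)
next
  case (Cons st R)
  have "conj_circ (run_circ (st # R)) p = conj_circ (run_circ R) (conj_circ (stage_circ st) p)"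
    by (simp add: run_circ_cons conj_circ_def)
  then show ?case using Cons.IH[of "conj_circ (stage_circ st) ` S" "conj_circ (stage_circ st) p"] Cons.prems by auto
qed

lemma sched_append: "sched t (a @ b) = sched (sched t a) b"
  by (induction a arbitrary: t) auto

lemma sched_untouched: "q \<notin> (\<Union>g\<in>set gs. gate_qubits g) \<Longrightarrow> sched t gs q = t q"
  by (induction gs arbitrary: t) (auto simp: Let_def)

lemma g1_bound: "sched t (g1 v w a) a \<le> t a + 2"
  by (auto simp: g1_def Let_def)

lemma g1_qubits: "(\<Union>g\<in>set (g1 v w a). gate_qubits g) \<subseteq> {a}"
  by (auto simp: g1_def)

lemma step1_bound: "distinct Q \<Longrightarrow> (\<forall>q\<in>set Q. t q \<le> M) \<Longrightarrow> (\<forall>q. t q \<le> M + 2) \<Longrightarrow>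
   sched t (step1 v w Q) q \<le> M + 2"
proof (induction Q arbitrary: t)
  case Nil then show ?case by (simp add: step1_def)
next
  case (Cons a Q)
  let ?t1 = "sched t (g1 v w a)"
  have un: "?t1 x = t x" if "x \<noteq> a" for x using g1_qubits[of v w a] that by (intro sched_untouched) blast
  have "?t1 a \<le> M + 2" using g1_bound[of t v w a] Cons(3) by force
  then have A: "\<forall>x. ?t1 x \<le> M + 2" using un Cons(4) by metis
  have B: "\<forall>x\<in>set Q. ?t1 x \<le> M"
  proof
    fix x assume x: "x \<in> set Q"
    then have "x \<noteq> a" using Cons(2) by auto
    then show "?t1 x \<le> M" using un x Cons(3) by simp
  qed
  show ?case using Cons.IH[of ?t1] Cons(2) A B by (simp add: step1_cons sched_append)
qed

lemma round_bound: "distinct Q \<Longrightarrow> (\<forall>q\<in>set Q. t q \<le> M) \<Longrightarrow> (\<forall>q. t q \<le> Suc M) \<Longrightarrow>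
   sched t (cnot_round Q) q \<le> Suc M"
proof (induction Q arbitrary: t rule: cnot_round.induct)
  case (1 a b rest)
  let ?t1 = "(\<lambda>q. if q = b \<or> q = a then Suc (max (t b) (t a)) else t q)"
  have "max (t b) (t a) \<le> M" using 1(3) by simp
  then have A: "\<forall>x. ?t1 x \<le> Suc M" using 1(4) by auto
  have B: "\<forall>x\<in>set rest. ?t1 x \<le> M" using 1(2,3) by auto
  show ?case using 1(1)[of ?t1] 1(2) A B by (simp add: Let_def)
qed auto

lemma tree_bound: "distinct Q \<Longrightarrow> length Q \<le> 2^m \<Longrightarrow> (\<forall>q. t q \<le> M) \<Longrightarrow>
   sched t (cnot_tree_fuel k Q) q \<le> M + m"
proof (induction k arbitrary: Q t M m)
  case 0 then have "t q \<le> M" by simp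
  then show ?case by simp
next
  case (Suc k)
  show ?case
  proof (cases "length Q \<le> 1")
    case True then have "t q \<le> M" using Suc by simp
    then show ?thesis using True by simp
  next
    case False
    then have "m \<noteq> 0" using Suc(3) by (cases m) auto
    then obtain m' where m: "m = Suc m'" by (cases m) auto
    let ?t1 = "sched t (cnot_round Q)"
    have t1: "\<forall>x. ?t1 x \<le> Suc M" using round_bound[OF Suc(2)] Suc(4) by (simp add: le_SucI)
    have "length (keep_targets Q) \<le> 2^m'" using keep_len[of Q] Suc(3) m by simp
    then have "sched ?t1 (cnot_tree_fuel k (keep_targets Q)) q \<le> Suc M + m'"
      using Suc.IH[OF keep_distinct[OF Suc(2)] _ t1] by blast
    then show ?thesis using False m by (simp add: sched_append)
  qed
qed

lemma stage_bound:
  assumes ok: "stage_ok n S (T,v,w,Q)" and len: "card T + 1 \<le> 2^m" and t: "\<forall>q. t q \<le> M"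
  shows "sched t (stage_circ (T,v,w,Q)) q \<le> M + 2 + m"
proof -
  note F = stage_facts[OF ok]
  have "length Q \<le> card T + 1" using ok F(2) distinct_card[of Q] by (auto simp: stage_ok_def Let_def)
  then have lq: "length Q \<le> 2^m" using len by linarith
  let ?t1 = "sched t (step1 v w Q)"
  have "\<forall>x. ?t1 x \<le> M + 2" using step1_bound[OF F(2)] t by (simp add: le_SucI)
  then have "sched ?t1 (cnot_tree_fuel (length Q) Q) q \<le> M + 2 + m" by (rule tree_bound[OF F(2) lq])
  then show ?thesis by (simp add: stage_circ_def stage_gates_def cnot_tree_def sched_append)
qed

lemma pow_exists: "(r::nat) \<ge> 1 \<Longrightarrow> \<exists>m. r < 2^m \<and> 2^m \<le> 2 * r"
proof (induction r rule: less_induct)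
  case (less r)
  show ?case
  proof (cases "r = 1")
    case True then show ?thesis by (intro exI[of _ 1]) simp
  next
    case False
    then have "r div 2 \<ge> 1" "r div 2 < r" using less(2) by auto
    then obtain m where "r div 2 < 2^m" "2^m \<le> 2 * (r div 2)" using less(1) by blast
    then show ?thesis by (intro exI[of _ "Suc m"]) auto
  qed
qed

lemma log_exists: "(r::nat) \<ge> 1 \<Longrightarrow> \<exists>m. r + 1 \<le> 2^m \<and> real m \<le> 1 + log 2 (real r)"
proof -
  assume r: "r \<ge> 1"
  obtain m where m: "r < 2^m" "2^m \<le> 2 * r" using pow_exists[OF r] by blast
  have "real (2^m) \<le> real (2 * r)" using m(2) by linarith
  then have "(2::real) powr real m \<le> 2 * real r" by (simp add: powr_realpow)
  then have "log 2 ((2::real) powr real m) \<le> log 2 (2 * real r)" using r by (subst log_le_cancel_iff) auto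
  then have "real m \<le> log 2 2 + log 2 (real r)" using r by (simp add: log_mult)
  then show ?thesis using m(1) by (intro exI[of _ m]) auto
qed

lemma stage_bound2:
  assumes ok: "stage_ok n S st"
  shows "\<exists>m. real m \<le> 1 + log 2 (real (stage_rank st)) \<and>
     (\<forall>t M q. (\<forall>q. t q \<le> M) \<longrightarrow> sched t (stage_circ st) q \<le> M + 2 + m)"
proof -
  obtain T v w Q where st: "st = (T,v,w,Q)" by (cases st) auto
  note ok' = ok[unfolded st]
  have "card T \<ge> 1" using T_nonempty[OF ok'] ok' by (auto simp: stage_ok_def Let_def Suc_leI card_gt_0_iff)
  then obtain m where m: "card T + 1 \<le> 2^m" "real m \<le> 1 + log 2 (real (card T))" using log_exists by blast
  show ?thesis using m stage_bound[OF ok' m(1)] st by (auto simp: stage_rank_def)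
qed

lemma depth_le:
  assumes "\<forall>q. real (sched (\<lambda>_. 0) gs q) \<le> B" "0 \<le> B"
  shows "real (depth gs) \<le> B"
proof -
  let ?X = "insert 0 (sched (\<lambda>_. 0) gs ` (\<Union>g\<in>set gs. gate_qubits g))"
  have fq: "finite (gate_qubits g)" for g by (cases g) auto
  have fin: "finite ?X" using fq by simp
  have "Max ?X \<in> ?X" by (rule Max_in[OF fin]) auto
  then show ?thesis using assms unfolding depth_def by auto
qed

lemma log_nonneg_nat: "0 \<le> log 2 (real (r::nat))"
  by (cases "r = 0") (auto simp: log_def)

lemma rank_pos: "stage_ok n S st \<Longrightarrow> stage_rank st \<ge> 1"
proof -
  assume ok: "stage_ok n S st"
  obtain T v w Q where st: "st = (T,v,w,Q)" by (cases st) auto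
  have "T \<noteq> {}" using T_nonempty ok st by blast
  moreover have "finite T" using ok st by (simp add: stage_ok_def Let_def)
  ultimately show ?thesis using st by (simp add: stage_rank_def Suc_leI card_gt_0_iff)
qed

lemma rank_bound': "invar n r S \<Longrightarrow> stage_ok n S st \<Longrightarrow> stage_rank st \<le> r"
  by (cases st) (auto simp: stage_rank_def dest: rank_bound)

lemma run_bound: "complete_run n S R \<Longrightarrow> invar n r S \<Longrightarrow> (\<forall>q. t q \<le> M) \<Longrightarrow>
  real (sched t (run_circ R) q) \<le> real M + real (length R) * (3 + log 2 (real r))"
proof (induction R arbitrary: S t M)
  case Nil then show ?case by (simp add: run_circ_def)
next
  case (Cons st R)
  have ok: "stage_ok n S st" and cr: "complete_run n (conj_circ (stage_circ st) ` S) R" using Cons(2) by auto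
  obtain m where m: "real m \<le> 1 + log 2 (real (stage_rank st))"
    "\<forall>t M q. (\<forall>q. t q \<le> M) \<longrightarrow> sched t (stage_circ st) q \<le> M + 2 + m"
    using stage_bound2[OF ok] by blast
  have r1: "stage_rank st \<ge> 1" by (rule rank_pos[OF ok])
  have r2: "stage_rank st \<le> r" by (rule rank_bound'[OF Cons(3) ok])
  have "log 2 (real (stage_rank st)) \<le> log 2 (real r)" using r1 r2 by (subst log_le_cancel_iff) auto
  then have mr: "real m \<le> 1 + log 2 (real r)" using m(1) by linarith
  let ?t1 = "sched t (stage_circ st)"
  have t1: "\<forall>q. ?t1 q \<le> M + 2 + m"
  proof
    fix q show "?t1 q \<le> M + 2 + m" using m(2)[rule_format, of t M q] Cons(4) by simp
  qed
  have ih: "real (sched ?t1 (run_circ R) q) \<le> real (M + 2 + m) + real (length R) * (3 + log 2 (real r))"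
    by (rule Cons.IH[OF cr invar_step[OF ok Cons(3)] t1])
  have e: "sched t (run_circ (st # R)) q = sched ?t1 (run_circ R) q" by (simp add: run_circ_cons sched_append)
  have e2: "real (M + 2 + m) = real M + 2 + real m" by simp
  have e3: "real (length (st # R)) * (3 + log 2 (real r)) = (3 + log 2 (real r)) + real (length R) * (3 + log 2 (real r))"
    by (simp add: algebra_simps)
  show ?case unfolding e e3 using ih e2 mr by linarith
qed

lemma stages_ok: "complete_run n S R \<Longrightarrow> st \<in> set R \<Longrightarrow> \<exists>S'. stage_ok n S' st"
  by (induction R arbitrary: S) auto

lemma stage_depth: "stage_ok n S st \<Longrightarrow> real (depth (stage_circ st)) \<le> 3 * (1 + log 2 (real (stage_rank st)))"
proof -
  assume ok: "stage_ok n S st"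
  obtain m where m: "real m \<le> 1 + log 2 (real (stage_rank st))"
    "\<forall>t M q. (\<forall>q. t q \<le> M) \<longrightarrow> sched t (stage_circ st) q \<le> M + 2 + m"
    using stage_bound2[OF ok] by blast
  have L: "0 \<le> log 2 (real (stage_rank st))" by (rule log_nonneg_nat)
  have "\<forall>q. real (sched (\<lambda>_. 0) (stage_circ st) q) \<le> 3 + log 2 (real (stage_rank st))"
  proof
    fix q
    have "sched (\<lambda>_. 0) (stage_circ st) q \<le> 0 + 2 + m" using m(2)[rule_format, of "\<lambda>_. 0" 0 q] by simp
    then have "real (sched (\<lambda>_. 0) (stage_circ st) q) \<le> 2 + real m" by linarith
    then show "real (sched (\<lambda>_. 0) (stage_circ st) q) \<le> 3 + log 2 (real (stage_rank st))" using m(1) by linarith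
  qed
  then have "real (depth (stage_circ st)) \<le> 3 + log 2 (real (stage_rank st))" using L by (intro depth_le) auto
  moreover have "3 * (1 + log 2 (real (stage_rank st))) = 3 + 3 * log 2 (real (stage_rank st))" by simp
  ultimately show ?thesis using L by linarith
qed

theorem mainTheorem6:
  "\<exists>C::real. C > 0 \<and>
    (\<forall>(n::nat) (P::pauli set) (r::nat).
       (\<forall>p\<in>P. pauli_on n p) \<and>
       (\<forall>p\<in>P. \<forall>q\<in>P. symp n p q = 0) \<and>
       (\<exists>G. finite G \<and> f2indep G \<and> card G = r \<and> f2span G = f2span P)
       \<longrightarrow>
       (\<forall>R. partial_run n P R \<longrightarrow> length R \<le> n \<and> (\<exists>R'. complete_run n P (R @ R'))) \<and>
       (\<forall>R. complete_run n P R \<longrightarrow>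
          (\<forall>p\<in>P. diagonal_on n (conj_circ (run_circ R) p)) \<and>
          (\<forall>st\<in>set R. real (depth (stage_circ st)) \<le> C * (1 + log 2 (real (stage_rank st)))) \<and>
          real (depth (run_circ R)) \<le> C * real n * (1 + log 2 (real r))))"
proof (intro exI[of _ "3::real"] conjI allI impI)
  show "(0::real) < 3" by simp
  fix n :: nat and P :: "pauli set" and r :: nat
  assume H: "(\<forall>p\<in>P. pauli_on n p) \<and> (\<forall>p\<in>P. \<forall>q\<in>P. symp n p q = 0) \<and>
       (\<exists>G. finite G \<and> f2indep G \<and> card G = r \<and> f2span G = f2span P)"
  have I: "invar n r P"
  proof -
    obtain G where G: "finite G" "card G = r" "f2span G = f2span P" using H by blast
    have "P \<subseteq> PV.span G" using G(3) PV.span_superset[of P] by (simp add: f2span_eq)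
    then show ?thesis using H G unfolding invar_def by auto
  qed
  {
    fix R assume pr: "partial_run n P R"
    show "length R \<le> n" using partial_len[OF pr] card_active[of n P] by linarith
  }
  {
    fix R assume pr: "partial_run n P R"
    obtain R' where "complete_run n (post R P) R'" using complete_exists[OF partial_invar[OF pr I]] by blast
    then show "\<exists>R'. complete_run n P (R @ R')" using complete_append[OF pr] by blast
  }
  {
    fix R assume cr: "complete_run n P R"
    show "\<forall>p\<in>P. diagonal_on n (conj_circ (run_circ R) p)" using complete_diag[OF cr] by blast
  }
  {
    fix R assume cr: "complete_run n P R"
    show "\<forall>st\<in>set R. real (depth (stage_circ st)) \<le> 3 * (1 + log 2 (real (stage_rank st)))"
      using stages_ok[OF cr] stage_depth by blast
  }
  {
    fix R assume cr: "complete_run n P R"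
    let ?L = "log 2 (real r)"
    have L: "0 \<le> ?L" by (rule log_nonneg_nat)
    have len: "length R \<le> n" using partial_len[OF complete_partial[OF cr]] card_active[of n P] by linarith
    have b: "\<forall>q. real (sched (\<lambda>_. 0) (run_circ R) q) \<le> real (length R) * (3 + ?L)"
      using run_bound[OF cr I, of "\<lambda>_. 0" 0] by simp
    have "real (length R) * (3 + ?L) \<le> real n * (3 + ?L)" using len L by (intro mult_right_mono) auto
    also have "\<dots> \<le> 3 * real n * (1 + ?L)"
    proof -
      have h1: "0 \<le> real n * ?L" using L by (intro mult_nonneg_nonneg) auto
      have h2: "real n * (3 + ?L) = 3 * real n + real n * ?L" by (simp add: algebra_simps)
      have h3: "3 * real n * (1 + ?L) = 3 * real n + 3 * (real n * ?L)" by (simp add: algebra_simps)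
      show ?thesis unfolding h2 h3 using h1 by linarith
    qed
    finally have "real (length R) * (3 + ?L) \<le> 3 * real n * (1 + ?L)" .
    moreover have "real (depth (run_circ R)) \<le> real (length R) * (3 + ?L)" using b L by (intro depth_le) auto
    ultimately show "real (depth (run_circ R)) \<le> 3 * real n * (1 + ?L)" by linarith
  }
qed

end
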